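(* Let $n$ be a positive integer. (a) If $\lambda^{3n/2}>(1+\sqrt2)C_1$, then $c_n>0$. (b) If $\lambda^{3n/2}>\frac{(1+\sqrt2)C_1}{\sqrt\lambda(\sqrt\lambda-1)}$, then $c_{n+1}>c_n$.
   Context: Standing setup: $p,q\in\mathbb{Z}$ are such that $x^3-px-q$ is irreducible over $\mathbb{Q}$ with exactly one real root $\theta$ (one has $3\theta^2-4p>0$ and $3\theta^2-p>0$). $K=\mathbb{Q}(\theta)\subset\mathbb{R}$, $\mathcal{O}_K$ its ring of integers. $d$ is a positive integer with $\mathcal{O}_K\subseteq\frac1d\mathbb{Z}[\theta]$. $\lambda\in\mathcal{O}_K$ is a unit with $\lambda>1$. For $n\ge1$ the rationals $a_n,b_n,c_n$ are defined by $a_n+b_n\theta+c_n\theta^2=\lambda^n$, and $X_n=a_n+pc_n-b_n\theta$, $Y_n=a_n+pc_n-c_n\theta^2$, $Z_n=b_n\theta-c_n\theta^2$, $k_n=dc_n$. Constants: $C_1=\max\{\sqrt2,\ \frac{\sqrt2|\theta|}{\sqrt{3\theta^2-4p}}\}$, $C_2=\frac{\sqrt d}{\sqrt{3\theta^2-p}}$. *)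

theory Defs
  imports "HOL-Analysis.Analysis" "HOL-Computational_Algebra.Polynomial"
begin

definition in_K :: "real \<Rightarrow> real \<Rightarrow> bool" where
  "in_K \<theta> x \<longleftrightarrow> (\<exists>r s t :: rat. x = of_rat r + of_rat s * \<theta> + of_rat t * \<theta>^2)"

definition in_OK :: "real \<Rightarrow> real \<Rightarrow> bool" where
  "in_OK \<theta> x \<longleftrightarrow> in_K \<theta> x \<and> algebraic_int x"

definition unit_OK :: "real \<Rightarrow> real \<Rightarrow> bool" where
  "unit_OK \<theta> x \<longleftrightarrow> in_OK \<theta> x \<and> x \<noteq> 0 \<and> in_OK \<theta> (inverse x)"

definition OK_sub_dZtheta :: "real \<Rightarrow> nat \<Rightarrow> bool" where
  "OK_sub_dZtheta \<theta> d \<longleftrightarrow> (\<forall>x. in_OK \<theta> x \<longrightarrow>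
      (\<exists>a b c :: int. x = (of_int a + of_int b * \<theta> + of_int c * \<theta>^2) / real d))"

definition C1 :: "int \<Rightarrow> real \<Rightarrow> real" where
  "C1 p \<theta> = max (sqrt 2) (sqrt 2 * \<bar>\<theta>\<bar> / sqrt (3 * \<theta>^2 - 4 * of_int p))"

end

theory Submission imports Defs "Berlekamp_Zassenhaus.Factor_Bound" begin

interpretation qr: map_poly_inj_idom_hom "of_rat :: rat \<Rightarrow> real" ..
interpretation qc: map_poly_inj_idom_hom "of_rat :: rat \<Rightarrow> complex" ..


lemma transfer_root:
  fixes fQ P :: "rat poly" and th :: real and z :: complex
  assumes irr: "irreducible fQ" and fth: "poly (map_poly of_rat fQ) th = 0"
    and Pth: "poly (map_poly of_rat P) th = 0" and fz: "poly (map_poly of_rat fQ) z = 0"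
  shows "poly (map_poly of_rat P) z = 0"
proof (cases "fQ dvd P")
  case True then obtain k where "P = fQ * k" by (auto elim: dvdE)
  then show ?thesis using fz by (simp add: qc.hom_mult)
next
  case False
  have "prime_elem fQ" using irr by (simp add: field_poly_irreducible_imp_prime)
  hence "coprime fQ P" using False by (simp add: prime_elem_imp_coprime)
  hence g: "gcd fQ P = 1" by simp
  have "fst (bezout_coefficients fQ P) * fQ + snd (bezout_coefficients fQ P) * P = 1"
    using bezout_coefficients_fst_snd[of fQ P] g by simp
  hence "poly (map_poly (of_rat :: rat \<Rightarrow> real) (fst (bezout_coefficients fQ P) * fQ + snd (bezout_coefficients fQ P) * P)) th = 1"
    by simp
  moreover have "poly (map_poly (of_rat :: rat \<Rightarrow> real) (fst (bezout_coefficients fQ P) * fQ + snd (bezout_coefficients fQ P) * P)) th = 0"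
    using fth Pth by (simp add: qr.hom_mult qr.hom_add)
  ultimately show ?thesis by simp
qed

lemma monic_factor_int:
  fixes gi :: "int poly" and h k :: "rat poly"
  assumes gh: "of_int_poly gi = h * k" and lg: "lead_coeff gi = 1" and lh: "lead_coeff h = 1"
  shows "Polynomial.coeff h i \<in> \<int>"
proof -
  obtain r rg where rn: "rat_to_normalized_int_poly h = (r, rg)" by force
  from rat_to_normalized_int_poly[OF rn] have hr: "h = Polynomial.smult r (of_int_poly rg)" and r0: "r > 0" by auto
  from rat_to_int_factor_explicit[OF gh rn] obtain w where gw: "gi = rg * Polynomial.smult (content gi) w" by blast
  from gw have "lead_coeff gi = lead_coeff (rg * Polynomial.smult (content gi) w)" by (rule arg_cong)
  hence "lead_coeff rg * (content gi * lead_coeff w) = 1"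
    using lg by (simp only: lead_coeff_mult lead_coeff_smult)
  hence "lead_coeff rg dvd 1" by (metis dvdI)
  hence "lead_coeff rg = 1 \<or> lead_coeff rg = -1" using zdvd1_eq by fastforce
  moreover have "r * of_int (lead_coeff rg) = 1" using lh hr r0 by (simp add: lead_coeff_smult)
  ultimately have "lead_coeff rg = 1" "r = 1" using r0 by auto
  hence "h = of_int_poly rg" using hr by simp
  thus ?thesis by simp
qed

lemma three_roots_dvd:
  fixes P :: "complex poly"
  assumes "poly P a = 0" "poly P b = 0" "poly P c = 0" "a\<noteq>b" "a\<noteq>c" "b\<noteq>c"
  shows "[:-a,1:]*[:-b,1:]*[:-c,1:] dvd P"
proof -
  obtain P1 where P1: "P = [:-a,1:] * P1" using assms(1) poly_eq_0_iff_dvd by (metis dvdE)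
  have "poly P1 b = 0" using assms(2,4) P1 by simp
  then obtain P2 where P2: "P1 = [:-b,1:] * P2" using poly_eq_0_iff_dvd by (metis dvdE)
  have "poly P2 c = 0" using assms(3,5,6) P1 P2 by simp
  then obtain P3 where P3: "P2 = [:-c,1:] * P3" using poly_eq_0_iff_dvd by (metis dvdE)
  have "P = ([:-a,1:]*[:-b,1:]*[:-c,1:]) * P3" by (simp only: P1 P2 P3 mult.assoc)
  thus ?thesis by (rule dvdI)
qed

lemma no_rat_root:
  fixes p q :: int and x :: rat
  assumes irr: "irreducible ([:- of_int q, - of_int p, 0, 1:] :: rat poly)"
  shows "x^3 - of_int p * x - of_int q \<noteq> 0"
proof
  assume "x^3 - of_int p * x - of_int q = 0"
  hence "poly ([:- of_int q, - of_int p, 0, 1:] :: rat poly) x = 0"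
    by (simp add: algebra_simps power3_eq_cube)
  then obtain k where k: "([:- of_int q, - of_int p, 0, 1:] :: rat poly) = [:-x,1:] * k"
    using poly_eq_0_iff_dvd by (metis dvdE)
  have "\<not> is_unit ([:-x,1:] :: rat poly)" by (simp add: is_unit_pCons_iff)
  hence "is_unit k" using irreducibleD[OF irr k] by blast
  then obtain c where "k = [:c:]" using is_unit_poly_iff by blast
  hence "([:- of_int q, - of_int p, 0, 1:] :: rat poly) = Polynomial.smult c [:-x,1:]" using k by simp
  moreover have "degree (Polynomial.smult c [:-x,1:]) \<le> degree [:-x,1::rat:]" by (rule degree_smult_le)
  ultimately have "degree ([:- of_int q, - of_int p, 0, 1:] :: rat poly) \<le> 1" by simp
  thus False by simp
qed

lemma cubic_factor:
  fixes x th P :: "'a::comm_ring_1"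
  shows "x^3 - P * x - (th^3 - P * th) = (x - th)*(x^2+th* x+th^2-P)"
  by (simp add: algebra_simps power2_eq_square power3_eq_cube)

lemma A_pos:
  fixes p q :: int and th :: real
  assumes irr: "irreducible ([:- of_int q, - of_int p, 0, 1:] :: rat poly)"
    and root: "th^3 - of_int p * th - of_int q = 0"
    and unique_root: "\<forall>x::real. x^3 - of_int p * x - of_int q = 0 \<longrightarrow> x = th"
  shows "3* th^2 - 4* of_int p > 0"
proof (rule ccontr)
  assume neg: "\<not> 3* th^2 - 4* of_int p > 0"
  define w where "w = sqrt (4* of_int p - 3* th^2)"
  have w2: "w^2 = 4* of_int p - 3* th^2" unfolding w_def using neg by simp
  have q: "of_int q = th^3 - of_int p * th" using root by simp
  define x1 where "x1 = (-th + w)/2"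
  define x2 where "x2 = (-th - w)/2"
  have "x1^2 + th* x1 + th^2 - of_int p = 0" unfolding x1_def using w2 by (simp add: field_simps power2_eq_square)
  hence "x1^3 - of_int p * x1 - of_int q = 0" unfolding q cubic_factor by simp
  hence e1: "x1 = th" using unique_root by blast
  have "x2^2 + th* x2 + th^2 - of_int p = 0" unfolding x2_def using w2 by (simp add: field_simps power2_eq_square)
  hence "x2^3 - of_int p * x2 - of_int q = 0" unfolding q cubic_factor by simp
  hence e2: "x2 = th" using unique_root by blast
  have "w = 0" "th = 0" using e1 e2 unfolding x1_def x2_def by auto
  hence p0: "p = 0" using w2 by simp
  hence q0: "q = 0" using q \<open>th = 0\<close> by simp
  have "([:- of_int q, - of_int p, 0, 1:] :: rat poly) = [:0,1:] * [:0,0,1:]" using p0 q0 by simp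
  from irreducibleD[OF irr this] show False by (simp add: is_unit_pCons_iff)
qed

definition alpha :: "int \<Rightarrow> real \<Rightarrow> complex" where
  "alpha p th = Complex (-th/2) (sqrt (3* th^2 - 4* of_int p)/2)"

lemma alpha_root:
  fixes p q :: int and th :: real
  assumes A: "3* th^2 - 4* of_int p > 0"
    and root: "th^3 - of_int p * th - of_int q = 0"
  shows "(alpha p th)^3 - of_int p * alpha p th - of_int q = 0"
proof -
  define v where "v = sqrt (3* th^2 - 4* of_int p)/2"
  have v2: "v^2 = (3* th^2 - 4* of_int p)/4" unfolding v_def using A by (simp add: power_divide)
  have pv: "of_int p = 3* th^2/4 - v^2" using v2 by simp
  have q: "of_int q = th^3 - of_int p * th" using root by simp
  have "alpha p th = Complex (-th/2) v" unfolding alpha_def v_def by simp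
  moreover have "(Complex (-th/2) v)^3 - of_int p * Complex (-th/2) v - of_int q = 0"
    unfolding power3_eq_cube
    by (simp add: complex_eq_iff q pv algebra_simps power2_eq_square power3_eq_cube)
  ultimately show ?thesis by simp
qed

lemma polyQ_eval:
  fixes z :: "'a::field_char_0"
  shows "poly (map_poly of_rat ([:- of_int q, - of_int p, 0, 1:] :: rat poly)) z = z^3 - of_int p * z - of_int q"
  by (simp add: algebra_simps power3_eq_cube of_rat_minus)

lemma alpha_cnj_root:
  fixes p q :: int and th :: real
  assumes A: "3* th^2 - 4* of_int p > 0"
    and root: "th^3 - of_int p * th - of_int q = 0"
  shows "(cnj (alpha p th))^3 - of_int p * cnj (alpha p th) - of_int q = 0"
proof -
  have "cnj ((alpha p th)^3 - of_int p * alpha p th - of_int q) = 0"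
    using alpha_root[OF A root] by simp
  thus ?thesis by simp
qed

lemma cofr: "(of_rat x :: complex) = of_real (of_rat x)"
  by (cases x) (simp add: of_rat_rat)

lemma mu_parts:
  fixes r s t :: rat and u v :: real
  shows "Re (of_rat r + of_rat s * Complex u v + of_rat t * (Complex u v)^2)
           = of_rat r + of_rat s * u + of_rat t * (u^2 - v^2)"
    and "Im (of_rat r + of_rat s * Complex u v + of_rat t * (Complex u v)^2)
           = of_rat s * v + of_rat t * (2 * u * v)"
  by (simp_all add: power2_eq_square algebra_simps cofr)


lemma cnj_of_rat[simp]: "cnj (of_rat x) = of_rat x"
  by (simp add: cofr)

lemma id3: fixes a b c th v P Q :: real
  assumes "P = 3* th^2/4 - v^2" "Q = th^3 - P* th"
  shows "(a + b* th + c* th^2) * ((a + b*(-th/2) + c*((-th/2)^2 - v^2))^2 + (b* v + c*(2*(-th/2)* v))^2) = c^3* Q^2 - b* c^2* P* Q + b^3* Q + a* c^2* P^2 - 3* a* b* c* Q - a* b^2* P + 2* a^2* c* P + a^3"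
  unfolding assms by (simp add: field_simps power2_eq_square power3_eq_cube)

lemma id2: fixes a b c th v P Q :: real
  assumes "P = 3* th^2/4 - v^2" "Q = th^3 - P* th"
  shows "2*(a + b* th + c* th^2) * (a + b*(-th/2) + c*((-th/2)^2 - v^2)) + (a + b*(-th/2) + c*((-th/2)^2 - v^2))^2 + (b* v + c*(2*(-th/2)* v))^2 = c^2* P^2 - 3* b* c* Q - b^2* P + 4* a* c* P + 3* a^2"
  unfolding assms by (simp add: field_simps power2_eq_square power3_eq_cube)

lemma id1: fixes a b c th v P :: real
  assumes "P = 3* th^2/4 - v^2"
  shows "(a + b* th + c* th^2) + 2*(a + b*(-th/2) + c*((-th/2)^2 - v^2)) = 3* a + 2* P* c"
  unfolding assms by (simp add: field_simps power2_eq_square power3_eq_cube)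

lemma three_prod: "[:-a,1:]*[:-b,1:]*[:-c,1:] = [:-(a* b* c), a* b+a* c+b* c, -(a+b+c), (1::'a::comm_ring_1):]"
  by (simp add: algebra_simps)

lemma norm_int:
  fixes p q :: int and th x :: real and r s t :: rat
  assumes irr: "irreducible ([:- of_int q, - of_int p, 0, 1:] :: rat poly)"
    and root: "th^3 - of_int p * th - of_int q = 0"
    and A: "3* th^2 - 4 * of_int p > 0"
    and x: "x = of_rat r + of_rat s * th + of_rat t * th^2"
    and ai: "algebraic_int x" and irrat: "x \<notin> \<rat>"
  shows "x * (cmod (of_rat r + of_rat s * alpha p th + of_rat t * (alpha p th)^2))^2 \<in> \<int>"
proof -
  define fQ where "fQ = ([:- of_int q, - of_int p, 0, 1:] :: rat poly)"
  define v where "v = sqrt (3* th^2 - 4 * of_int p)/2"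
  have v0: "v > 0" using A unfolding v_def by simp
  have v2: "v^2 = (3* th^2 - 4 * of_int p)/4" unfolding v_def using A by (simp add: power_divide)
  have pv: "of_int p = 3* th^2/4 - v^2" using v2 by simp
  have qv: "of_int q = th^3 - of_int p * th" using root by simp
  have al: "alpha p th = Complex (-th/2) v" by (simp add: alpha_def v_def)
  define mu where "mu = of_rat r + of_rat s * alpha p th + of_rat t * (alpha p th)^2"
  define X where "X = of_rat r + of_rat s * (-th/2) + of_rat t * ((-th/2)^2 - v^2)"
  define Y where "Y = of_rat s * v + of_rat t * (2 * (-th/2) * v)"
  have muXY: "mu = Complex X Y" using mu_parts[of r s "-th/2" v t]
    by (simp add: complex_eq_iff mu_def al X_def Y_def)
  have cmu: "cnj mu = of_rat r + of_rat s * cnj (alpha p th) + of_rat t * (cnj (alpha p th))^2"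
    by (simp add: mu_def)
  have fth: "poly (map_poly of_rat fQ) th = 0" using root unfolding fQ_def polyQ_eval .
  have fal: "poly (map_poly of_rat fQ) (alpha p th) = 0"
    using alpha_root[OF A root] unfolding fQ_def polyQ_eval .
  have fcal: "poly (map_poly of_rat fQ) (cnj (alpha p th)) = 0"
    using alpha_cnj_root[OF A root] unfolding fQ_def polyQ_eval .
  obtain gi where gi: "poly (of_int_poly gi) x = 0" "lead_coeff gi = 1"
    using ai algebraic_int_altdef_ipoly by blast
  define R where "R = [:r,s,t:]"
  have Rev: "poly (map_poly of_rat R) z = of_rat r + of_rat s * z + of_rat t * z^2"
    for z :: "'a::field_char_0"
    by (simp add: R_def algebra_simps power2_eq_square of_rat_hom.map_poly_pCons_hom)
  define gq where "gq = (of_int_poly gi :: rat poly)"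
  have mg: "map_poly of_rat gq = (of_int_poly gi :: 'a::field_char_0 poly)"
    by (simp add: gq_def map_poly_map_poly o_def)
  define P where "P = pcompose gq R"
  have Pev: "poly (map_poly of_rat P) z = poly (of_int_poly gi) (of_rat r + of_rat s * z + of_rat t * z^2)"
    for z :: "'a::field_char_0"
    by (simp add: P_def of_rat_hom.map_poly_pcompose poly_pcompose mg Rev)
  have Pth: "poly (map_poly of_rat P) th = 0" using Pev[of th] gi x by simp
  have gmu: "poly (of_int_poly gi) mu = 0"
    using transfer_root[OF irr[folded fQ_def] fth Pth fal] Pev[of "alpha p th"] mu_def by simp
  have gcmu: "poly (of_int_poly gi) (cnj mu) = 0"
    using transfer_root[OF irr[folded fQ_def] fth Pth fcal] Pev[of "cnj (alpha p th)"] cmu by simp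
  have "map_poly of_real (of_int_poly gi :: real poly) = (of_int_poly gi :: complex poly)"
    by (simp add: map_poly_map_poly o_def)
  moreover have "poly (map_poly of_real (of_int_poly gi :: real poly)) (complex_of_real x) = of_real (poly (of_int_poly gi) x)"
    by (rule of_real_hom.poly_map_poly)
  ultimately have gx: "poly (of_int_poly gi) (complex_of_real x) = 0"
    using gi(1) by simp
  have Yv: "Y = v * (of_rat s - of_rat t * th)" unfolding Y_def by (simp add: algebra_simps)
  have Y0: "Y \<noteq> 0"
  proof
    assume "Y = 0"
    hence st: "of_rat s = of_rat t * th" using v0 Yv by simp
    show False
    proof (cases "t = 0")
      case True
      hence "s = 0" using st by simp
      hence "x = of_rat r" using x True by simp
      thus False using irrat by simp
    next
      case False
      hence thr: "th = of_rat (s/t)" using st by (simp add: of_rat_divide field_simps)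
      have "of_rat ((s/t)^3 - of_int p * (s/t) - of_int q) = (0::real)"
        using root unfolding thr by (simp add: of_rat_diff of_rat_mult of_rat_power of_rat_divide)
      hence "(s/t)^3 - of_int p * (s/t) - of_int q = 0" by simp
      thus False using no_rat_root[OF irr] by blast
    qed
  qed
  have d1: "complex_of_real x \<noteq> mu" "complex_of_real x \<noteq> cnj mu" "mu \<noteq> cnj mu"
    using Y0 by (auto simp: muXY complex_eq_iff)
  have hdvd: "[:-complex_of_real x,1:]*[:-mu,1:]*[:-cnj mu,1:] dvd of_int_poly gi"
    by (rule three_roots_dvd[OF gx gmu gcmu d1])
  define E1 :: rat where "E1 = 3* r + 2 * of_int p * t"
  define E2 :: rat where "E2 = t^2 * (of_int p)^2 - 3 * s * t * of_int q - s^2 * of_int p + 4 * r * t * of_int p + 3 * r^2"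
  define NN :: rat where "NN = t^3 * (of_int q)^2 - s * t^2 * of_int p * of_int q + s^3 * of_int q
      + r * t^2 * (of_int p)^2 - 3 * r * s * t * of_int q - r * s^2 * of_int p + 2 * r^2 * t * of_int p + r^3"
  have i1: "x + 2* X = of_rat E1"
  proof -
    have "x + 2* X = 3 * of_rat r + 2 * of_int p * of_rat t"
      unfolding x X_def by (rule id1[OF pv])
    also have "\<dots> = of_rat E1" by (simp add: E1_def of_rat_add of_rat_mult of_rat_diff of_rat_power)
    finally show ?thesis .
  qed
  have i2: "2* x* X + X^2 + Y^2 = of_rat E2"
  proof -
    have "2* x* X + X^2 + Y^2 = (of_rat t)^2*(of_int p)^2 - 3* of_rat s* of_rat t* of_int q - (of_rat s)^2* of_int p + 4* of_rat r* of_rat t* of_int p + 3*(of_rat r)^2"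
      unfolding x X_def Y_def by (rule id2[OF pv qv])
    also have "\<dots> = of_rat E2" by (simp add: E2_def of_rat_add of_rat_mult of_rat_diff of_rat_power)
    finally show ?thesis .
  qed
  have i3: "x*(X^2 + Y^2) = of_rat NN"
  proof -
    have "x*(X^2 + Y^2) = (of_rat t)^3*(of_int q)^2 - of_rat s*(of_rat t)^2* of_int p* of_int q + (of_rat s)^3* of_int q + of_rat r*(of_rat t)^2*(of_int p)^2 - 3* of_rat r* of_rat s* of_rat t* of_int q - of_rat r*(of_rat s)^2* of_int p + 2*(of_rat r)^2* of_rat t* of_int p + (of_rat r)^3"
      unfolding x X_def Y_def by (rule id3[OF pv qv])
    also have "\<dots> = of_rat NN" by (simp add: NN_def of_rat_add of_rat_mult of_rat_diff of_rat_power)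
    finally show ?thesis .
  qed
  define hQ where "hQ = [:-NN, E2, -E1, 1:]"
  have c1: "complex_of_real x * mu * cnj mu = of_rat NN"
  proof -
    have "complex_of_real x * mu * cnj mu = complex_of_real (x*(X^2+Y^2))"
      by (simp add: muXY complex_eq_iff power2_eq_square algebra_simps)
    thus ?thesis using i3 by (simp add: cofr)
  qed
  have c2: "complex_of_real x * mu + complex_of_real x * cnj mu + mu * cnj mu = of_rat E2"
  proof -
    have "complex_of_real x * mu + complex_of_real x * cnj mu + mu * cnj mu = complex_of_real (2* x* X + X^2 + Y^2)"
      by (simp add: muXY complex_eq_iff power2_eq_square algebra_simps)
    thus ?thesis using i2 by (simp add: cofr)
  qed
  have c3: "complex_of_real x + mu + cnj mu = of_rat E1"
  proof -
    have "complex_of_real x + mu + cnj mu = complex_of_real (x + 2* X)"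
      by (simp add: muXY complex_eq_iff)
    thus ?thesis using i1 by (simp add: cofr)
  qed
  have hmap: "map_poly of_rat hQ = [:-complex_of_real x,1:]*[:-mu,1:]*[:-cnj mu,1:]"
    unfolding three_prod c1 c2 c3 hQ_def by (simp add: of_rat_minus)
  have "map_poly (of_rat :: rat \<Rightarrow> complex) hQ dvd map_poly of_rat gq"
    using hdvd unfolding hmap mg .
  hence "hQ dvd gq" by (rule of_rat_hom.dvd_map_poly_hom_imp_dvd)
  then obtain k where k: "gq = hQ * k" by (auto elim: dvdE)
  have "Polynomial.coeff hQ 0 \<in> \<int>"
    by (rule monic_factor_int[of gi hQ k]) (use k gi(2) in \<open>simp_all add: gq_def hQ_def\<close>)
  hence "NN \<in> \<int>" by (simp add: hQ_def)
  then obtain kk where kk: "NN = of_int kk" by (auto elim: Ints_cases)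
  have "cmod mu ^ 2 = X^2 + Y^2" by (simp add: muXY cmod_def)
  hence "x * (cmod mu)^2 = of_int kk" using i3 kk by simp
  thus ?thesis unfolding mu_def by simp
qed



lemma cs_bound: fixes z :: complex and k :: real
  shows "\<bar>Re z + k * Im z\<bar> \<le> sqrt (1 + k^2) * cmod z"
proof -
  have e: "(1+k^2)*((Re z)^2 + (Im z)^2) = (Re z + k * Im z)^2 + (k * Re z - Im z)^2"
    by (simp add: algebra_simps power2_eq_square)
  have "\<bar>Re z + k * Im z\<bar>^2 \<le> (1+k^2)*((Re z)^2 + (Im z)^2)"
    unfolding e power2_abs by simp
  hence "\<bar>Re z + k * Im z\<bar> \<le> sqrt ((1+k^2)*((Re z)^2 + (Im z)^2))" by (rule real_le_rsqrt)
  thus ?thesis by (simp add: real_sqrt_mult cmod_def)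
qed

lemma C1_bound:
  fixes th :: real and p :: int
  assumes A: "3* th^2 - 4 * of_int p > 0"
  shows "sqrt (1 + (3 * th / sqrt (3* th^2 - 4 * of_int p))^2) \<le> (1 + sqrt 2) * C1 p th"
proof -
  define A where "A = 3* th^2 - 4 * of_int p"
  define C where "C = C1 p th"
  have A0: "A > 0" using A by (simp add: A_def)
  have C2: "C \<ge> sqrt 2" unfolding C_def C1_def by simp
  have C3: "C \<ge> sqrt 2 * \<bar>th\<bar> / sqrt A" unfolding C_def C1_def A_def by simp
  have "C^2 \<ge> (sqrt 2)^2" using C2 by (intro power_mono) auto
  hence C2': "C^2 \<ge> 2" by simp
  have "C^2 \<ge> (sqrt 2 * \<bar>th\<bar> / sqrt A)^2" using C3 A0 by (intro power_mono) auto
  hence C3': "C^2 \<ge> 2 * th^2 / A" using A0 by (simp add: power_divide power_mult_distrib)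
  have k2: "(3 * th / sqrt A)^2 = 9 * (th^2 / A)" using A0 by (simp add: power_divide power_mult_distrib)
  have s2: "(1 + sqrt 2)^2 \<ge> 5"
  proof -
    have "sqrt 2 \<ge> 1" by simp
    moreover have "(1 + sqrt 2)^2 = 3 + 2 * sqrt 2" by (simp add: power2_eq_square algebra_simps)
    ultimately show ?thesis by simp
  qed
  have "2 * th^2 / A = 2 * (th^2/A)" by simp
  hence "1 + (3 * th / sqrt A)^2 \<le> 5 * C^2" using C2' C3' k2 by linarith
  also have "\<dots> \<le> (1 + sqrt 2)^2 * C^2" using s2 by (intro mult_right_mono) auto
  also have "\<dots> = ((1 + sqrt 2) * C)^2" by (simp add: power_mult_distrib)
  finally have "sqrt (1 + (3 * th / sqrt A)^2) \<le> sqrt (((1 + sqrt 2) * C)^2)" by (rule real_sqrt_le_mono)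
  also have "\<dots> = (1 + sqrt 2) * C"
  proof -
    have "0 \<le> sqrt (2::real)" by simp
    hence "0 \<le> (1 + sqrt 2) * C" using C2 by (intro mult_nonneg_nonneg) linarith+
    thus ?thesis by simp
  qed
  finally show ?thesis by (simp add: A_def C_def)
qed

lemma ints_one: fixes a b :: real
  assumes "a \<in> \<int>" "b \<in> \<int>" "a \<ge> 0" "b \<ge> 0" "a * b = 1" shows "a = 1"
proof -
  obtain m where m: "a = of_int m" using assms(1) by (auto elim: Ints_cases)
  obtain l where l: "b = of_int l" using assms(2) by (auto elim: Ints_cases)
  have "of_int (m * l) = (1::real)" using assms(5) m l by simp
  hence "m * l = 1" by (simp only: of_int_eq_1_iff)
  moreover have "m \<ge> 0" "l \<ge> 0" using assms m l by auto
  ultimately have "m = 1" using pos_zmult_eq_1_iff by (metis order_le_less mult_eq_0_iff zero_neq_one)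
  thus ?thesis using m by simp
qed

lemma powr_sigma: fixes lam :: real assumes "lam > 0"
  shows "lam powr (3 * real n / 2) = (sqrt lam)^(3* n)"
proof -
  have "(sqrt lam)^(3* n) = (sqrt lam) powr (real (3* n))"
    by (rule powr_realpow[symmetric]) (use assms in simp)
  also have "\<dots> = (lam powr (1/2)) powr (real (3* n))"
    using assms by (simp add: powr_half_sqrt)
  also have "\<dots> = lam powr (3 * real n / 2)" by (simp add: powr_powr)
  finally show ?thesis by simp
qed


lemma Rev_r: "poly (map_poly (of_rat :: rat \<Rightarrow> real) [:r,s,t:]) z = of_rat r + of_rat s * z + of_rat t * z^2"
  by (simp add: algebra_simps power2_eq_square of_rat_hom.map_poly_pCons_hom)
lemma Rev_c: "poly (map_poly (of_rat :: rat \<Rightarrow> complex) [:r,s,t:]) z = of_rat r + of_rat s * z + of_rat t * z^2"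
  by (simp add: algebra_simps power2_eq_square of_rat_hom.map_poly_pCons_hom)

theorem mainTheorem9:
  fixes p q :: int and \<theta> lam :: real and d n :: nat
  assumes irr: "irreducible ([:- of_int q, - of_int p, 0, 1:] :: rat poly)"
    and root: "\<theta>^3 - of_int p * \<theta> - of_int q = 0"
    and unique_root: "\<forall>x::real. x^3 - of_int p * x - of_int q = 0 \<longrightarrow> x = \<theta>"
    and d_pos: "d > 0"
    and d_OK: "OK_sub_dZtheta \<theta> d"
    and unit: "unit_OK \<theta> lam"
    and lam_gt: "lam > 1"
    and n_pos: "n \<ge> 1"
  shows "(lam powr (3 * real n / 2) > (1 + sqrt 2) * C1 p \<theta> \<longrightarrow>
           (\<forall>a b c :: rat. of_rat a + of_rat b * \<theta> + of_rat c * \<theta>^2 = lam^n \<longrightarrow> c > 0))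
       \<and> (lam powr (3 * real n / 2) > (1 + sqrt 2) * C1 p \<theta> / (sqrt lam * (sqrt lam - 1)) \<longrightarrow>
           (\<forall>a b c a' b' c' :: rat.
               of_rat a + of_rat b * \<theta> + of_rat c * \<theta>^2 = lam^n \<longrightarrow>
               of_rat a' + of_rat b' * \<theta> + of_rat c' * \<theta>^2 = lam^(n+1) \<longrightarrow> c' > c))"
proof -
  have A: "3*\<theta>^2 - 4 * of_int p > 0" by (rule A_pos[OF irr root unique_root])
  define fQ where "fQ = ([:- of_int q, - of_int p, 0, 1:] :: rat poly)"
  have fth: "poly (map_poly of_rat fQ) \<theta> = 0" using root unfolding fQ_def polyQ_eval .
  have fal: "poly (map_poly of_rat fQ) (alpha p \<theta>) = 0"
    using alpha_root[OF A root] unfolding fQ_def polyQ_eval .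
  have irrf: "irreducible fQ" using irr unfolding fQ_def .
  from unit obtain r s t where lamR: "lam = of_rat r + of_rat s * \<theta> + of_rat t * \<theta>^2"
    and ai: "algebraic_int lam" and lam0: "lam \<noteq> 0"
    unfolding unit_OK_def in_OK_def in_K_def by blast
  from unit obtain r' s' t' where ilamR: "inverse lam = of_rat r' + of_rat s' * \<theta> + of_rat t' * \<theta>^2"
    and ai': "algebraic_int (inverse lam)"
    unfolding unit_OK_def in_OK_def in_K_def by blast
  have irr1: "lam \<notin> \<rat>"
  proof
    assume lq: "lam \<in> \<rat>"
    have "inverse lam \<in> \<rat>" using lq by simp
    hence "inverse lam \<in> \<int>" by (rule rational_algebraic_int_is_int[OF ai'])
    then obtain m where m: "inverse lam = of_int m" by (auto elim: Ints_cases)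
    have i0: "inverse lam > 0" using lam_gt by auto
    have i1: "inverse lam < inverse 1" by (rule less_imp_inverse_less[OF lam_gt]) simp
    have "of_int m > (0::real)" "of_int m < (1::real)" using i0 i1 m by auto
    hence "m > 0" "m < 1" by simp_all
    thus False by simp
  qed
  have irr2: "inverse lam \<notin> \<rat>"
  proof
    assume "inverse lam \<in> \<rat>"
    hence "inverse (inverse lam) \<in> \<rat>" by simp
    thus False using irr1 by simp
  qed
  define mu where "mu = of_rat r + of_rat s * alpha p \<theta> + of_rat t * (alpha p \<theta>)^2"
  define mu' where "mu' = of_rat r' + of_rat s' * alpha p \<theta> + of_rat t' * (alpha p \<theta>)^2"
  have N1: "lam * (cmod mu)^2 \<in> \<int>"
    unfolding mu_def by (rule norm_int[OF irr root A lamR ai irr1])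
  have N2: "inverse lam * (cmod mu')^2 \<in> \<int>"
    unfolding mu'_def by (rule norm_int[OF irr root A ilamR ai' irr2])
  have "mu * mu' = 1"
  proof -
    define P where "P = [:r,s,t:] * [:r',s',t':] - 1"
    have "poly (map_poly of_rat P) \<theta> = lam * inverse lam - 1"
      unfolding P_def by (simp only: qr.hom_minus qr.hom_mult qr.hom_one poly_diff poly_mult poly_1 Rev_r lamR[symmetric] ilamR[symmetric])
    hence "poly (map_poly of_rat P) \<theta> = 0" using lam0 by simp
    from transfer_root[OF irrf fth this fal]
    show ?thesis unfolding P_def by (simp only: qc.hom_minus qc.hom_mult qc.hom_one poly_diff poly_mult poly_1 Rev_c mu_def mu'_def diff_eq_eq mult_1 add_0)
  qed
  hence "cmod mu * cmod mu' = 1" by (metis norm_mult norm_one)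
  hence "(lam * (cmod mu)^2) * (inverse lam * (cmod mu')^2) = 1"
    using lam0 by (simp add: power2_eq_square field_simps)
  hence N: "lam * (cmod mu)^2 = 1" using ints_one[OF N1 N2] lam_gt by simp
  define \<sigma> where "\<sigma> = sqrt lam"
  have sig1: "\<sigma> > 1" using lam_gt unfolding \<sigma>_def by simp
  have lsig: "lam = \<sigma>^2" using lam_gt unfolding \<sigma>_def by simp
  have cmu: "cmod mu = 1/\<sigma>"
  proof -
    have "(cmod mu)^2 = (1/\<sigma>)^2" using N lsig sig1 by (simp add: field_simps power2_eq_square)
    thus ?thesis using sig1 by (simp add: power2_eq_iff_nonneg)
  qed
  define v where "v = sqrt (3*\<theta>^2 - 4 * of_int p)/2"
  have v0: "v > 0" using A unfolding v_def by simp
  have v2: "v^2 = (3*\<theta>^2 - 4 * of_int p)/4" unfolding v_def using A by (simp add: power_divide)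
  have pv: "of_int p = 3*\<theta>^2/4 - v^2" using v2 by simp
  have al: "alpha p \<theta> = Complex (-\<theta>/2) v" by (simp add: alpha_def v_def)
  define k where "k = 3 * \<theta> / sqrt (3*\<theta>^2 - 4 * of_int p)"
  have kv: "k = 3 * \<theta> / (2 * v)" unfolding k_def v_def by simp
  define D where "D = 3*\<theta>^2 - of_int p"
  have D0: "D > 0" unfolding D_def using A by (simp add: power2_eq_square) (smt (verit) zero_le_square)
  define S where "S = sqrt (1 + k^2)"
  have SC: "S \<le> (1 + sqrt 2) * C1 p \<theta>" unfolding S_def k_def by (rule C1_bound[OF A])
  have S0: "S \<ge> 0" unfolding S_def by simp
  have ceq: "D * of_rat c = lam^m - Re (mu^m) - k * Im (mu^m)"
    if eq: "of_rat a + of_rat b * \<theta> + of_rat c * \<theta>^2 = lam^m" for a b c :: rat and m :: nat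
  proof -
    define P where "P = [:r,s,t:]^m - [:a,b,c:]"
    have "poly (map_poly of_rat P) \<theta> = lam^m - (of_rat a + of_rat b * \<theta> + of_rat c * \<theta>^2)"
      unfolding P_def by (simp only: qr.hom_minus qr.hom_power poly_diff poly_power Rev_r lamR[symmetric])
    hence "poly (map_poly of_rat P) \<theta> = 0" using eq by simp
    from transfer_root[OF irrf fth this fal]
    have z: "poly (map_poly of_rat P) (alpha p \<theta>) = 0" .
    have "poly (map_poly of_rat P) (alpha p \<theta>) = mu^m - (of_rat a + of_rat b * alpha p \<theta> + of_rat c * (alpha p \<theta>)^2)"
      unfolding P_def by (simp only: qc.hom_minus qc.hom_power poly_diff poly_power Rev_c mu_def)
    hence "mu^m = of_rat a + of_rat b * alpha p \<theta> + of_rat c * (alpha p \<theta>)^2" using z by simp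
    hence re: "Re (mu^m) = of_rat a + of_rat b * (-\<theta>/2) + of_rat c * ((-\<theta>/2)^2 - v^2)"
      and im: "Im (mu^m) = of_rat b * v + of_rat c * (2 * (-\<theta>/2) * v)"
      using mu_parts[of a b "-\<theta>/2" v c] by (simp_all add: al)
    show ?thesis unfolding re im eq[symmetric] kv D_def pv using v0
      by (simp add: field_simps power2_eq_square)
  qed
  have bnd: "\<bar>Re z + k * Im z\<bar> \<le> S * cmod z" for z by (unfold S_def) (rule cs_bound)
  have pw: "lam powr (3 * real n / 2) = \<sigma>^(3*n)" unfolding \<sigma>_def using lam_gt by (simp add: powr_sigma)
  show ?thesis
  proof (intro conjI impI allI)
    fix a b c :: rat
    assume h: "lam powr (3 * real n / 2) > (1 + sqrt 2) * C1 p \<theta>"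
      and eq: "of_rat a + of_rat b * \<theta> + of_rat c * \<theta>^2 = lam^n"
    have "D * of_rat c = lam^n - (Re (mu^n) + k * Im (mu^n))" using ceq[OF eq] by simp
    also have "\<dots> \<ge> lam^n - S * cmod (mu^n)" using bnd[of "mu^n"] by simp
    finally have "D * of_rat c \<ge> \<sigma>^(2*n) - S * (1/\<sigma>)^n"
      by (simp add: norm_power cmu lsig power_mult)
    moreover have "\<sigma>^(2*n) - S * (1/\<sigma>)^n = (\<sigma>^(3*n) - S) / \<sigma>^n"
      using sig1 by (simp add: field_simps power_add[symmetric])
    moreover have "\<sigma>^(3*n) - S > 0" using h SC pw by simp
    ultimately have "D * of_rat c > 0" using sig1 by (smt (verit) divide_pos_pos zero_less_power)
    hence "(of_rat c :: real) > 0" using D0 by (simp add: zero_less_mult_iff)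
    thus "c > 0" by simp
  next
    fix a b c a' b' c' :: rat
    assume h: "lam powr (3 * real n / 2) > (1 + sqrt 2) * C1 p \<theta> / (sqrt lam * (sqrt lam - 1))"
      and eq: "of_rat a + of_rat b * \<theta> + of_rat c * \<theta>^2 = lam^n"
      and eq': "of_rat a' + of_rat b' * \<theta> + of_rat c' * \<theta>^2 = lam^(n+1)"
    have "D * (of_rat c' - of_rat c) = lam^(n+1) - lam^n - (Re (mu^(n+1) - mu^n) + k * Im (mu^(n+1) - mu^n))"
      using ceq[OF eq] ceq[OF eq'] by (simp add: algebra_simps)
    also have "\<dots> \<ge> lam^(n+1) - lam^n - S * cmod (mu^(n+1) - mu^n)"
      using bnd[of "mu^(n+1) - mu^n"] by simp
    finally have i1: "D * (of_rat c' - of_rat c) \<ge> lam^(n+1) - lam^n - S * cmod (mu^(n+1) - mu^n)" .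
    have "cmod (mu^(n+1) - mu^n) = cmod (mu^n) * cmod (mu - 1)"
      by (simp add: norm_mult[symmetric] algebra_simps)
    also have "\<dots> \<le> (1/\<sigma>)^n * (1/\<sigma> + 1)"
    proof -
      have "cmod (mu - 1) \<le> cmod mu + 1" using norm_triangle_ineq4[of mu 1] by simp
      hence "cmod (mu - 1) \<le> 1/\<sigma> + 1" by (simp add: cmu)
      moreover have "(1/\<sigma>)^n \<ge> 0" using sig1 by simp
      ultimately show ?thesis unfolding norm_power cmu by (rule mult_left_mono)
    qed
    finally have i2: "cmod (mu^(n+1) - mu^n) \<le> (1/\<sigma>)^n * (1/\<sigma> + 1)" .
    have "S < \<sigma>^(3*n) * (\<sigma> * (\<sigma> - 1))"
    proof -
      have "(1 + sqrt 2) * C1 p \<theta> / (\<sigma> * (\<sigma> - 1)) < \<sigma>^(3*n)" using h pw unfolding \<sigma>_def by simp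
      hence "(1 + sqrt 2) * C1 p \<theta> < \<sigma>^(3*n) * (\<sigma> * (\<sigma> - 1))" using sig1
        by (simp add: divide_less_eq mult_pos_pos)
      thus ?thesis using SC by simp
    qed
    define F where "F = (1/\<sigma>)^n * (1/\<sigma> + 1)"
    have s0: "1/\<sigma> > 0" using sig1 by simp
    have F0: "F > 0" unfolding F_def by (intro mult_pos_pos zero_less_power s0) (use s0 in linarith)
    have sne: "\<sigma> \<noteq> 0" using sig1 by simp
    have p1: "\<sigma>^(2*n) * \<sigma>^n = \<sigma>^(3*n)"
    proof -
      have "\<sigma>^(2*n) * \<sigma>^n = \<sigma>^(2*n + n)" by (rule power_add[symmetric])
      moreover have "2*n + n = 3*n" by simp
      ultimately show ?thesis by simp
    qed
    have p2: "(1/\<sigma>)^n * \<sigma>^n = 1"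
    proof -
      have "(1/\<sigma>)^n * \<sigma>^n = ((1/\<sigma>) * \<sigma>)^n" by (rule power_mult_distrib[symmetric])
      thus ?thesis using sne by simp
    qed
    have p3: "(\<sigma> * (\<sigma> - 1)) * (1/\<sigma> + 1) = \<sigma>^2 - 1"
      using sne by (simp add: field_simps power2_eq_square)
    have p4: "lam^(n+1) - lam^n = \<sigma>^(2*n) * (\<sigma>^2 - 1)"
      unfolding lsig by (simp add: power_mult[symmetric] algebra_simps)
    have eqT: "\<sigma>^(3*n) * (\<sigma> * (\<sigma> - 1)) * F = lam^(n+1) - lam^n"
    proof -
      have "\<sigma>^(3*n) * (\<sigma> * (\<sigma> - 1)) * F
          = (\<sigma>^(2*n) * (\<sigma>^n * (1/\<sigma>)^n)) * ((\<sigma> * (\<sigma> - 1)) * (1/\<sigma> + 1))"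
        unfolding F_def p1[symmetric] by (simp only: mult_ac)
      also have "\<dots> = \<sigma>^(2*n) * (\<sigma>^2 - 1)" using p2 p3 by (simp add: mult_ac)
      finally show ?thesis using p4 by simp
    qed
    have "S * F < lam^(n+1) - lam^n" using \<open>S < _\<close> F0 eqT by (metis mult_strict_right_mono)
    moreover have "S * cmod (mu^(n+1) - mu^n) \<le> S * F" unfolding F_def using i2 S0 by (rule mult_left_mono)
    ultimately have "D * (of_rat c' - of_rat c) > 0" using i1 by linarith
    hence "(of_rat c' - of_rat c :: real) > 0" using D0 by (simp add: zero_less_mult_iff)
    thus "c' > c" by (simp add: of_rat_diff[symmetric] del: of_rat_diff)
  qed
qed

end
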